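(* Let $\mathcal{C}_1$ and $\mathcal{C}_2$ be any two disjoint maximal commuting classes of two-qubit Pauli operators ($d=4$). Then there exists a third maximal commuting class $\mathcal{C}_3'$ of Pauli operators, disjoint from $\mathcal{C}_1$ and $\mathcal{C}_2$, such that the common eigenbases of $\mathcal{C}_1,\mathcal{C}_2,\mathcal{C}_3'$ form a weakly unextendible set of three mutually unbiased bases in $\mathbb{C}^4$.
   Context: Two-qubit Pauli operators are the tensor products $P_1\otimes P_2$ with $P_k\in\{I,X,Y,Z\}$. A maximal commuting class in $d=4$ is a set of $3$ mutually commuting non-identity two-qubit Pauli operators. Two orthonormal bases of $\mathbb{C}^d$ are mutually unbiased if $|\langle a|b\rangle|=1/\sqrt d$ for all vectors $a$ of the first and $b$ of the second; common eigenbases of pairwise disjoint maximal commuting Pauli classes are mutually unbiased. A set of mutually unbiased bases obtained as common eigenbases of Pauli classes is weakly unextendible if there is no further basis, unbiased to all of them, that is the common eigenbasis of a maximal commuting class of Pauli operators. *)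

theory Defs
  imports Complex_Main "Jordan_Normal_Form.Matrix"
begin

text \<open>Single-qubit Pauli matrices, indexed 0 = I, 1 = X, 2 = Y, 3 = Z
  (entries given for row/column indices 0,1).\<close>
definition pauli1 :: "nat \<Rightarrow> nat \<Rightarrow> nat \<Rightarrow> complex" where
  "pauli1 k r c =
     (if k = 0 then (if r = c then 1 else 0)
      else if k = 1 then (if r \<noteq> c then 1 else 0)
      else if k = 2 then (if r = 0 \<and> c = 1 then - \<i> else if r = 1 \<and> c = 0 then \<i> else 0)
      else (if r = c then (if r = 0 then 1 else -1) else 0))"

text \<open>Two-qubit Pauli operator P_k1 (tensor) P_k2 as a 4x4 complex matrix
  (Kronecker product written out, basis index i = 2*i1 + i2).\<close>
definition pauli2 :: "nat \<Rightarrow> nat \<Rightarrow> complex mat" where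
  "pauli2 k1 k2 = mat 4 4 (\<lambda>(i, j).
      pauli1 k1 (i div 2) (j div 2) * pauli1 k2 (i mod 2) (j mod 2))"

definition nonid_paulis :: "complex mat set" where
  "nonid_paulis = {pauli2 k1 k2 | k1 k2. k1 < 4 \<and> k2 < 4 \<and> (k1, k2) \<noteq> (0, 0)}"

definition max_comm_class :: "complex mat set \<Rightarrow> bool" where
  "max_comm_class C \<longleftrightarrow> C \<subseteq> nonid_paulis \<and> card C = 3 \<and>
     (\<forall>P\<in>C. \<forall>Q\<in>C. P * Q = Q * P)"

definition cinner4 :: "complex vec \<Rightarrow> complex vec \<Rightarrow> complex" where
  "cinner4 v w = (\<Sum>i<4. cnj (v $ i) * w $ i)"

definition orthonormal_basis4 :: "complex vec set \<Rightarrow> bool" where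
  "orthonormal_basis4 B \<longleftrightarrow> B \<subseteq> carrier_vec 4 \<and> card B = 4 \<and>
     (\<forall>v\<in>B. \<forall>w\<in>B. cinner4 v w = (if v = w then 1 else 0))"

definition common_eigenbasis :: "complex mat set \<Rightarrow> complex vec set \<Rightarrow> bool" where
  "common_eigenbasis C B \<longleftrightarrow> orthonormal_basis4 B \<and>
     (\<forall>P\<in>C. \<forall>v\<in>B. \<exists>ev. P *\<^sub>v v = ev \<cdot>\<^sub>v v)"

definition unbiased :: "complex vec set \<Rightarrow> complex vec set \<Rightarrow> bool" where
  "unbiased B1 B2 \<longleftrightarrow> orthonormal_basis4 B1 \<and> orthonormal_basis4 B2 \<and>
     (\<forall>a\<in>B1. \<forall>b\<in>B2. cmod (cinner4 a b) = 1 / sqrt 4)"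

definition weakly_unextendible_pauli_mubs :: "complex mat set list \<Rightarrow> bool" where
  "weakly_unextendible_pauli_mubs Cs \<longleftrightarrow>
     (\<exists>Bs. length Bs = length Cs \<and> (\<forall>i<length Cs. common_eigenbasis (Cs ! i) (Bs ! i))) \<and>
     (\<forall>Bs. length Bs = length Cs \<and> (\<forall>i<length Cs. common_eigenbasis (Cs ! i) (Bs ! i)) \<longrightarrow>
        (\<forall>i<length Cs. \<forall>j<length Cs. i \<noteq> j \<longrightarrow> unbiased (Bs ! i) (Bs ! j)) \<and>
        \<not> (\<exists>C B. max_comm_class C \<and> common_eigenbasis C B \<and>
               (\<forall>i<length Cs. unbiased B (Bs ! i))))"

end

theory Submission
  imports Defs "Jordan_Normal_Form.Determinant"
begin

definition m1 :: "nat \<Rightarrow> nat \<Rightarrow> nat" where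
  "m1 a b = (if a = 0 then b else if b = 0 then a else if a = b then 0 else 6 - a - b)"
definition anti1 :: "nat \<Rightarrow> nat \<Rightarrow> bool" where
  "anti1 a b = (a \<noteq> 0 \<and> b \<noteq> 0 \<and> a \<noteq> b)"
definition ph1 :: "nat \<Rightarrow> nat \<Rightarrow> complex" where
  "ph1 a b = (if a = 0 \<or> b = 0 \<or> a = b then 1 else
     if (a = 1 \<and> b = 2) \<or> (a = 2 \<and> b = 3) \<or> (a = 3 \<and> b = 1) then \<i> else - \<i>)"

lemma four_cases: "(a::nat) < 4 \<Longrightarrow> a = 0 \<or> a = 1 \<or> a = 2 \<or> a = 3" by auto
lemma two_cases: "(a::nat) < 2 \<Longrightarrow> a = 0 \<or> a = 1" by auto

lemma L1: "a < 4 \<Longrightarrow> b < 4 \<Longrightarrow> r < 2 \<Longrightarrow> c < 2 \<Longrightarrow>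
  pauli1 a r 0 * pauli1 b 0 c + pauli1 a r (Suc 0) * pauli1 b (Suc 0) c = ph1 a b * pauli1 (m1 a b) r c"
  apply (drule four_cases, drule four_cases, drule two_cases, drule two_cases)
  apply (elim disjE)
  by (simp_all add: pauli1_def ph1_def m1_def)

lemma ph1_swap: "a < 4 \<Longrightarrow> b < 4 \<Longrightarrow> ph1 b a = (if anti1 a b then - ph1 a b else ph1 a b)"
  apply (drule four_cases, drule four_cases)
  apply (elim disjE)
  by (simp_all add: ph1_def anti1_def)

lemma m1_comm: "m1 a b = m1 b a" by (auto simp: m1_def)
lemma m1_lt: "a < 4 \<Longrightarrow> b < 4 \<Longrightarrow> m1 a b < 4" by (auto simp: m1_def)
lemma m1_self: "m1 a a = 0" by (auto simp: m1_def)
lemma ph1_self: "ph1 a a = 1" by (auto simp: ph1_def)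
lemma ph1_nz: "ph1 a b \<noteq> 0" by (auto simp: ph1_def)

lemma pauli1_herm: "k < 4 \<Longrightarrow> r < 2 \<Longrightarrow> c < 2 \<Longrightarrow> cnj (pauli1 k c r) = pauli1 k r c"
  apply (drule four_cases, drule two_cases, drule two_cases)
  apply (elim disjE)
  by (simp_all add: pauli1_def)

lemma sum4: "(\<Sum>k<4. f k) = f 0 + f 1 + f 2 + f 3" for f :: "nat \<Rightarrow> 'a::comm_monoid_add"
  by (simp add: eval_nat_numeral ac_simps)

lemma pauli2_carrier[simp]: "pauli2 a b \<in> carrier_mat 4 4" by (simp add: pauli2_def)
lemma pauli2_dims[simp]: "dim_row (pauli2 a b) = 4" "dim_col (pauli2 a b) = 4" by (simp_all add: pauli2_def)

lemma mm4: "A \<in> carrier_mat 4 4 \<Longrightarrow> B \<in> carrier_mat 4 4 \<Longrightarrow> i < 4 \<Longrightarrow> j < 4 \<Longrightarrow>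
  (A * B) $$ (i, j) = (\<Sum>k<4. A $$ (i,k) * B $$ (k,j))"
  by (auto simp: scalar_prod_def row_def col_def lessThan_atLeast0 intro!: sum.cong)

lemma idx_cases: "(i::nat) < 4 \<Longrightarrow> i div 2 < 2 \<and> i mod 2 < 2" by auto

lemma abs4: "a0*b0*(c0*d0) + a0*b1*(c0*d1) + a1*b0*(c1*d0) + a1*b1*(c1*d1) =
   (a0*c0 + a1*c1)*(b0*d0+b1*d1)" for a0 :: complex by (simp add: algebra_simps)

lemma pauli2_entry: "a < 4 \<Longrightarrow> b < 4 \<Longrightarrow> c < 4 \<Longrightarrow> d < 4 \<Longrightarrow> i < 4 \<Longrightarrow> j < 4 \<Longrightarrow>
  (pauli2 a b * pauli2 c d) $$ (i,j) = ph1 a c * ph1 b d * pauli2 (m1 a c) (m1 b d) $$ (i,j)"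
proof -
  assume abcd: "a < 4" "b < 4" "c < 4" "d < 4" and ij: "i < 4" "j < 4"
  have h1: "pauli1 a (i div 2) 0 * pauli1 c 0 (j div 2) + pauli1 a (i div 2) (Suc 0) * pauli1 c (Suc 0) (j div 2)
     = ph1 a c * pauli1 (m1 a c) (i div 2) (j div 2)" using abcd ij by (intro L1) auto
  have h2: "pauli1 b (i mod 2) 0 * pauli1 d 0 (j mod 2) + pauli1 b (i mod 2) (Suc 0) * pauli1 d (Suc 0) (j mod 2)
     = ph1 b d * pauli1 (m1 b d) (i mod 2) (j mod 2)" using abcd ij by (intro L1) auto
  have "(pauli2 a b * pauli2 c d) $$ (i, j) = (\<Sum>k<4. pauli2 a b $$ (i,k) * pauli2 c d $$ (k,j))"
    using ij by (intro mm4) auto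
  also have "\<dots> = (pauli1 a (i div 2) 0 * pauli1 c 0 (j div 2) + pauli1 a (i div 2) (Suc 0) * pauli1 c (Suc 0) (j div 2)) *
     (pauli1 b (i mod 2) 0 * pauli1 d 0 (j mod 2) + pauli1 b (i mod 2) (Suc 0) * pauli1 d (Suc 0) (j mod 2))"
    using ij unfolding sum4 pauli2_def by (simp add: abs4)
  also have "\<dots> = ph1 a c * ph1 b d * pauli2 (m1 a c) (m1 b d) $$ (i,j)"
    unfolding h1 h2 using ij by (simp add: pauli2_def)
  finally show ?thesis .
qed

lemma pauli2_mult: "a < 4 \<Longrightarrow> b < 4 \<Longrightarrow> c < 4 \<Longrightarrow> d < 4 \<Longrightarrow>
  pauli2 a b * pauli2 c d = (ph1 a c * ph1 b d) \<cdot>\<^sub>m pauli2 (m1 a c) (m1 b d)"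
  by (rule eq_matI) (simp_all del: index_mult_mat(1) add: pauli2_entry)

lemma m1_inv: "a < 4 \<Longrightarrow> b < 4 \<Longrightarrow> m1 a (m1 a b) = b"
  apply (drule four_cases, drule four_cases) apply (elim disjE) by (simp_all add: m1_def)
lemma m1_zero: "a < 4 \<Longrightarrow> b < 4 \<Longrightarrow> m1 a b = 0 \<longleftrightarrow> a = b"
  apply (drule four_cases, drule four_cases) apply (elim disjE) by (simp_all add: m1_def)
lemma m1_0: "m1 0 b = b" by (simp add: m1_def)

definition tr1 :: "nat \<Rightarrow> complex" where "tr1 a = pauli1 a 0 0 + pauli1 a 1 1"
lemma tr1_0: "a < 4 \<Longrightarrow> a \<noteq> 0 \<Longrightarrow> tr1 a = 0"
  apply (drule four_cases) apply (elim disjE) by (simp_all add: tr1_def pauli1_def)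
lemma tr1_1: "tr1 0 = 2" by (simp add: tr1_def pauli1_def)

lemma pauli2_trace: "(\<Sum>i<4. pauli2 a b $$ (i,i)) = tr1 a * tr1 b"
  by (simp add: sum4 pauli2_def tr1_def algebra_simps)

lemma pauli2_herm: "i < 4 \<Longrightarrow> j < 4 \<Longrightarrow> a < 4 \<Longrightarrow> b < 4 \<Longrightarrow>
   cnj (pauli2 a b $$ (j, i)) = pauli2 a b $$ (i, j)"
  by (simp add: pauli2_def pauli1_herm)

lemma pauli2_00: "pauli2 0 0 = 1\<^sub>m 4"
proof (rule eq_matI)
  fix i j assume "i < dim_row (1\<^sub>m 4 :: complex mat)" "j < dim_col (1\<^sub>m 4 :: complex mat)"
  hence "i < 4" "j < 4" by auto
  thus "pauli2 0 0 $$ (i, j) = 1\<^sub>m 4 $$ (i, j)"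
    apply (simp add: pauli2_def pauli1_def)
    apply (drule four_cases, drule four_cases) apply (elim disjE) by simp_all
qed auto



definition ok :: "nat \<times> nat \<Rightarrow> bool" where "ok x = (fst x < 4 \<and> snd x < 4)"
definition pm :: "nat \<times> nat \<Rightarrow> complex mat" where "pm x = pauli2 (fst x) (snd x)"
definition ph :: "nat \<times> nat \<Rightarrow> nat \<times> nat \<Rightarrow> complex" where
  "ph x y = ph1 (fst x) (fst y) * ph1 (snd x) (snd y)"
definition comm2 :: "nat \<times> nat \<Rightarrow> nat \<times> nat \<Rightarrow> bool" where
  "comm2 x y = (anti1 (fst x) (fst y) = anti1 (snd x) (snd y))"
definition mulp :: "nat \<times> nat \<Rightarrow> nat \<times> nat \<Rightarrow> nat \<times> nat" where
  "mulp x y = (m1 (fst x) (fst y), m1 (snd x) (snd y))"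

lemma pm_carrier[simp]: "pm x \<in> carrier_mat 4 4" by (simp add: pm_def)
lemma pm_dims[simp]: "dim_row (pm x) = 4" "dim_col (pm x) = 4" by (simp_all add: pm_def)

lemma pm_mult: "ok x \<Longrightarrow> ok y \<Longrightarrow> pm x * pm y = ph x y \<cdot>\<^sub>m pm (mulp x y)"
  by (simp add: pm_def ok_def ph_def mulp_def pauli2_mult)
lemma ok_mulp: "ok x \<Longrightarrow> ok y \<Longrightarrow> ok (mulp x y)" by (simp add: ok_def mulp_def m1_lt)
lemma mulp_self: "mulp x x = (0,0)" by (simp add: mulp_def m1_self)
lemma ph_self: "ph x x = 1" by (simp add: ph_def ph1_self)
lemma ph_nz: "ph x y \<noteq> 0" by (simp add: ph_def ph1_nz)
lemma pm_00: "pm (0,0) = 1\<^sub>m 4" by (simp add: pm_def pauli2_00)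
lemma mulp_comm: "mulp x y = mulp y x" by (simp add: mulp_def m1_comm)
lemma mulp_inv: "ok x \<Longrightarrow> ok y \<Longrightarrow> mulp x (mulp x y) = y"
  by (simp add: mulp_def ok_def m1_inv)
lemma mulp_0: "mulp (0,0) y = y" by (simp add: mulp_def m1_0)
lemma mulp_zero: "ok x \<Longrightarrow> ok y \<Longrightarrow> mulp x y = (0,0) \<longleftrightarrow> x = y"
  by (auto simp: mulp_def ok_def m1_zero prod_eq_iff)
lemma ok_0: "ok (0,0)" by (simp add: ok_def)

lemma smult_one_mat: "(1::complex) \<cdot>\<^sub>m A = A" by (rule eq_matI) auto

lemma pm_sq: "ok x \<Longrightarrow> pm x * pm x = 1\<^sub>m 4"
  by (simp add: pm_mult mulp_self ph_self pm_00 smult_one_mat)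

lemma ph_swap: "ok x \<Longrightarrow> ok y \<Longrightarrow> ph y x = (if comm2 x y then ph x y else - ph x y)"
  by (auto simp: ph_def ok_def comm2_def ph1_swap)

lemma comm2_sym: "comm2 y x = comm2 x y" by (auto simp: comm2_def anti1_def)

lemma pm_swap: "ok x \<Longrightarrow> ok y \<Longrightarrow>
   pm y * pm x = (if comm2 x y then ph x y else - ph x y) \<cdot>\<^sub>m pm (mulp x y)"
  by (simp add: pm_mult ph_swap mulp_comm comm2_sym)

lemma pm_trace: "ok x \<Longrightarrow> x \<noteq> (0,0) \<Longrightarrow> (\<Sum>i<4. pm x $$ (i,i)) = 0"
  by (cases x) (auto simp: pm_def ok_def pauli2_trace tr1_0)

lemma pm_nz: assumes "ok z" shows "\<exists>i j. i < 4 \<and> j < 4 \<and> pm z $$ (i,j) \<noteq> 0"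
proof (rule ccontr)
  assume "\<not> ?thesis"
  hence "\<forall>i<4. \<forall>j<4. pm z $$ (i,j) = 0" by auto
  hence "(pm z * pm z) $$ (0,0) = 0" by (simp add: mm4 del: index_mult_mat(1))
  with pm_sq[OF assms] show False by simp
qed

lemma pm_comm_iff: assumes "ok x" "ok y"
  shows "(pm x * pm y = pm y * pm x) \<longleftrightarrow> comm2 x y"
proof
  assume c: "comm2 x y"
  have "pm y * pm x = ph x y \<cdot>\<^sub>m pm (mulp x y)" using pm_swap[OF assms] c by simp
  thus "pm x * pm y = pm y * pm x" using pm_mult[OF assms] by simp
next
  assume eq: "pm x * pm y = pm y * pm x"
  show "comm2 x y"
  proof (rule ccontr)
    assume nc: "\<not> comm2 x y"
    obtain i j where ij: "i < 4" "j < 4" "pm (mulp x y) $$ (i,j) \<noteq> 0"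
      using pm_nz[OF ok_mulp[OF assms]] by blast
    have e1: "(pm x * pm y) $$ (i,j) = ph x y * pm (mulp x y) $$ (i,j)" using pm_mult[OF assms] ij by simp
    have e2: "(pm y * pm x) $$ (i,j) = - ph x y * pm (mulp x y) $$ (i,j)" using pm_swap[OF assms] nc ij by simp
    have "ph x y * pm (mulp x y) $$ (i,j) = - ph x y * pm (mulp x y) $$ (i,j)"
      using eq e1 e2 by metis
    hence "2 * ph x y * pm (mulp x y) $$ (i,j) = 0" by (simp add: algebra_simps)
    thus False using ij ph_nz by simp
  qed
qed

lemma pm_anti: "ok x \<Longrightarrow> ok y \<Longrightarrow> \<not> comm2 x y \<Longrightarrow> pm y * pm x = (-1) \<cdot>\<^sub>m (pm x * pm y)"
  by (rule eq_matI) (simp_all add: pm_swap[of x y] pm_mult[of x y] del: index_mult_mat)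

lemma pm_inj: assumes "ok x" "ok y" "pm x = pm y" shows "x = y"
proof (rule ccontr)
  assume ne: "x \<noteq> y"
  have nz: "mulp x y \<noteq> (0,0)" using ne mulp_zero assms by auto
  have "ph x y \<cdot>\<^sub>m pm (mulp x y) = 1\<^sub>m 4" using pm_sq[OF assms(1)] assms pm_mult by metis
  hence "(\<Sum>i<4. (ph x y \<cdot>\<^sub>m pm (mulp x y)) $$ (i,i)) = (\<Sum>i<4. (1\<^sub>m 4 :: complex mat) $$ (i,i))" by simp
  also have "\<dots> = 4" by simp
  finally have "ph x y * (\<Sum>i<4. pm (mulp x y) $$ (i,i)) = 4" by (simp add: sum_distrib_left)
  thus False using pm_trace[OF ok_mulp[OF assms(1,2)] nz] by simp
qed

lemma mv4: "A \<in> carrier_mat 4 4 \<Longrightarrow> v \<in> carrier_vec 4 \<Longrightarrow> i < 4 \<Longrightarrow>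
   (A *\<^sub>v v) $ i = (\<Sum>j<4. A $$ (i,j) * v $ j)"
  by (auto simp: scalar_prod_def row_def lessThan_atLeast0 intro!: sum.cong)

definition herm :: "complex mat \<Rightarrow> bool" where
  "herm A = (\<forall>i<4. \<forall>j<4. cnj (A $$ (j,i)) = A $$ (i,j))"

lemma pm_herm: "ok x \<Longrightarrow> herm (pm x)"
  by (simp add: herm_def pm_def ok_def pauli2_herm)

lemma herm_inner: assumes A: "A \<in> carrier_mat 4 4" "herm A" and v: "v \<in> carrier_vec 4" "w \<in> carrier_vec 4"
  shows "cinner4 v (A *\<^sub>v w) = cinner4 (A *\<^sub>v v) w"
proof -
  have "cinner4 v (A *\<^sub>v w) = (\<Sum>i<4. \<Sum>j<4. cnj (v$i) * A$$(i,j) * w$j)"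
    using A v by (simp add: cinner4_def mv4 sum_distrib_left mult.assoc del: index_mult_mat_vec)
  also have "\<dots> = (\<Sum>j<4. \<Sum>i<4. cnj (v$i) * A$$(i,j) * w$j)" by (rule sum.swap)
  also have "\<dots> = (\<Sum>j<4. cnj (\<Sum>i<4. A$$(j,i) * v$i) * w$j)"
  proof (rule sum.cong[OF refl])
    fix j assume j: "j \<in> {..<4::nat}"
    have "cnj (\<Sum>i<4. A$$(j,i) * v$i) = (\<Sum>i<4. A$$(i,j) * cnj (v$i))"
      using A(2) j by (auto simp: herm_def cnj_sum intro!: sum.cong)
    show "(\<Sum>i<4. cnj (v$i) * A$$(i,j) * w$j) = cnj (\<Sum>i<4. A$$(j,i) * v$i) * w$j"
      unfolding \<open>cnj (\<Sum>i<4. A$$(j,i) * v$i) = (\<Sum>i<4. A$$(i,j) * cnj (v$i))\<close>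
      by (simp add: sum_distrib_left sum_distrib_right mult_ac)
  qed
  also have "\<dots> = cinner4 (A *\<^sub>v v) w" using A v by (simp add: cinner4_def mv4 del: index_mult_mat_vec)
  finally show ?thesis .
qed




lemma pm_mv_carrier[simp]: "pm x *\<^sub>v v \<in> carrier_vec 4" by (rule carrier_vecI) simp

lemma pm_mult_carrier[simp]: "pm x * pm y \<in> carrier_mat 4 4" by (rule carrier_matI) simp_all

lemma sum4_cong: "(\<And>i. i < 4 \<Longrightarrow> f i = g i) \<Longrightarrow> (\<Sum>i<4::nat. f i) = (\<Sum>i<4. g i)"
  by (rule sum.cong) auto

lemma ci_smult_r: "w \<in> carrier_vec 4 \<Longrightarrow> cinner4 v (c \<cdot>\<^sub>v w) = c * cinner4 v w"
  unfolding cinner4_def sum_distrib_left by (rule sum4_cong) (simp add: mult_ac)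
lemma ci_smult_l: "v \<in> carrier_vec 4 \<Longrightarrow> cinner4 (c \<cdot>\<^sub>v v) w = cnj c * cinner4 v w"
  unfolding cinner4_def sum_distrib_left by (rule sum4_cong) (simp add: mult_ac)
lemma ci_cnj: "cinner4 w v = cnj (cinner4 v w)"
  unfolding cinner4_def by (simp add: mult.commute)
lemma ci_self: "cinner4 v v = of_real (\<Sum>i<4. (cmod (v$i))^2)"
  unfolding cinner4_def of_real_sum complex_norm_square by (simp add: mult.commute)
lemma ci_self_zero: assumes "v \<in> carrier_vec 4" "cinner4 v v = 0" shows "v = 0\<^sub>v 4"
proof -
  have "complex_of_real (\<Sum>i<4. (cmod (v$i))^2) = 0" using assms(2) by (simp only: ci_self[symmetric])
  hence "(\<Sum>i<4. (cmod (v$i))^2) = 0" by (simp only: of_real_eq_0_iff)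
  hence "\<forall>i\<in>{..<4}. (cmod (v$i))^2 = 0" by (subst (asm) sum_nonneg_eq_0_iff) auto
  thus ?thesis using assms(1) by (intro eq_vecI) auto
qed

lemma smult_mat_mv: "A \<in> carrier_mat 4 4 \<Longrightarrow> v \<in> carrier_vec 4 \<Longrightarrow> (c \<cdot>\<^sub>m A) *\<^sub>v v = c \<cdot>\<^sub>v (A *\<^sub>v v)"
  by (rule eq_vecI) (simp_all add: mv4 sum_distrib_left mult_ac del: index_mult_mat_vec)

lemma ev_pm1: assumes "ok x" "v \<in> carrier_vec 4" "v \<noteq> 0\<^sub>v 4" "pm x *\<^sub>v v = e \<cdot>\<^sub>v v"
  shows "e = 1 \<or> e = -1"
proof -
  have "pm x *\<^sub>v (pm x *\<^sub>v v) = (pm x * pm x) *\<^sub>v v" using assms(2) assoc_mult_mat_vec[of "pm x" 4 4 "pm x" 4 v] by simp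
  also have "\<dots> = v" using pm_sq[OF assms(1)] assms(2) by simp
  finally have "v = pm x *\<^sub>v (e \<cdot>\<^sub>v v)" using assms(4) by simp
  also have "\<dots> = (e * e) \<cdot>\<^sub>v v" using assms(2,4) mult_mat_vec[of "pm x" 4 4 v e] by (simp add: smult_smult_assoc)
  finally have eq: "v = (e * e) \<cdot>\<^sub>v v" .
  have "\<exists>i<4. v $ i \<noteq> 0"
  proof (rule ccontr)
    assume "\<not> ?thesis"
    hence "v = 0\<^sub>v 4" using assms(2) by (intro eq_vecI) auto
    with assms(3) show False by simp
  qed
  then obtain i where i: "i < 4" "v $ i \<noteq> 0" by blast
  have "v $ i = ((e*e) \<cdot>\<^sub>v v) $ i" using arg_cong[OF eq, of "\<lambda>u. u $ i"] .
  hence "v $ i = (e*e) * v $ i" using i assms(2) by simp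
  hence "e * e = 1" using i by simp
  hence "(e - 1) * (e + 1) = 0" by (simp add: algebra_simps)
  thus ?thesis by (auto simp: eq_neg_iff_add_eq_0)
qed

lemma real_pm1: "e = 1 \<or> e = -1 \<Longrightarrow> cnj e = e" by auto

lemma ev_orth: assumes "ok x" "v \<in> carrier_vec 4" "w \<in> carrier_vec 4"
  "pm x *\<^sub>v v = a \<cdot>\<^sub>v v" "pm x *\<^sub>v w = b \<cdot>\<^sub>v w" "cnj a = a" "a \<noteq> b"
  shows "cinner4 v w = 0"
proof -
  have "b * cinner4 v w = cinner4 v (pm x *\<^sub>v w)" using assms by (simp add: ci_smult_r)
  also have "\<dots> = cinner4 (pm x *\<^sub>v v) w" using assms by (intro herm_inner pm_herm) auto
  also have "\<dots> = a * cinner4 v w" using assms by (simp add: ci_smult_l)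
  finally have "(b - a) * cinner4 v w = 0" by (simp add: algebra_simps)
  thus ?thesis using assms(7) by simp
qed

lemma ev_anti: assumes "ok p" "ok r" "\<not> comm2 p r" "v \<in> carrier_vec 4"
  "pm p *\<^sub>v v = l \<cdot>\<^sub>v v" "l = 1 \<or> l = -1"
  shows "cinner4 v (pm r *\<^sub>v v) = 0"
proof -
  have "l * cinner4 v (pm r *\<^sub>v v) = cinner4 v (pm r *\<^sub>v (l \<cdot>\<^sub>v v))"
    using assms(4) mult_mat_vec[of "pm r" 4 4 v l] by (simp add: ci_smult_r)
  also have "\<dots> = cinner4 v ((pm r * pm p) *\<^sub>v v)" using assms(4,5) assoc_mult_mat_vec[of "pm r" 4 4 "pm p" 4 v] by simp
  also have "\<dots> = cinner4 v (((-1) \<cdot>\<^sub>m (pm p * pm r)) *\<^sub>v v)" using pm_anti[OF assms(1,2,3)] by simp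
  also have "\<dots> = - cinner4 v (pm p *\<^sub>v (pm r *\<^sub>v v))" using assms(4)
      assoc_mult_mat_vec[of "pm p" 4 4 "pm r" 4 v]
    by (simp add: smult_mat_mv ci_smult_r)
  also have "\<dots> = - cinner4 (pm p *\<^sub>v v) (pm r *\<^sub>v v)" using assms(4)
    by (subst herm_inner) (auto intro: pm_herm assms)
  also have "\<dots> = - l * cinner4 v (pm r *\<^sub>v v)" using assms(4,5,6) by (auto simp: ci_smult_l)
  finally have "2 * l * cinner4 v (pm r *\<^sub>v v) = 0" by (simp add: algebra_simps)
  thus ?thesis using assms(6) by auto
qed

definition Um :: "(nat \<Rightarrow> complex vec) \<Rightarrow> complex mat" where
  "Um f = mat 4 4 (\<lambda>(i,k). f k $ i)"
definition Vm :: "(nat \<Rightarrow> complex vec) \<Rightarrow> complex mat" where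
  "Vm f = mat 4 4 (\<lambda>(k,j). cnj (f k $ j))"
definition onf :: "(nat \<Rightarrow> complex vec) \<Rightarrow> bool" where
  "onf f = ((\<forall>k<4. f k \<in> carrier_vec 4) \<and> (\<forall>k<4. \<forall>l<4. cinner4 (f k) (f l) = (if k = l then 1 else 0)))"

lemma UV: assumes "onf f" shows "Um f * Vm f = 1\<^sub>m 4"
proof -
  have "Vm f * Um f = 1\<^sub>m 4"
  proof (rule eq_matI)
    fix k l assume "k < dim_row (1\<^sub>m 4 :: complex mat)" "l < dim_col (1\<^sub>m 4 :: complex mat)"
    hence kl: "k < 4" "l < 4" by auto
    have "(Vm f * Um f) $$ (k,l) = (\<Sum>j<4. Vm f $$ (k,j) * Um f $$ (j,l))"
      using kl by (intro mm4) (auto simp: Vm_def Um_def)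
    also have "\<dots> = cinner4 (f k) (f l)" unfolding cinner4_def
      by (rule sum4_cong) (use kl in \<open>simp add: Vm_def Um_def\<close>)
    finally show "(Vm f * Um f) $$ (k,l) = 1\<^sub>m 4 $$ (k,l)" using assms kl by (simp add: onf_def)
  qed (auto simp: Vm_def Um_def)
  moreover have c1: "Vm f \<in> carrier_mat 4 4" "Um f \<in> carrier_mat 4 4" by (auto simp: Vm_def Um_def)
  ultimately show ?thesis using mat_mult_left_right_inverse[OF c1] by blast
qed

lemma expand: assumes "onf f" "w \<in> carrier_vec 4" "i < 4"
  shows "w $ i = (\<Sum>k<4. cinner4 (f k) w * f k $ i)"
proof -
  have "(\<Sum>j<4. (Um f * Vm f) $$ (i,j) * w $ j) = (\<Sum>j<4. if i = j then w $ j else 0)"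
    using UV[OF assms(1)] assms(3) by (intro sum4_cong) simp
  also have "\<dots> = w $ i" using assms(3) by simp
  finally have "w $ i = (\<Sum>j<4. (Um f * Vm f) $$ (i,j) * w $ j)" by simp
  also have "\<dots> = (\<Sum>j<4. \<Sum>k<4. f k $ i * cnj (f k $ j) * w $ j)"
    by (rule sum4_cong) (simp add: mm4 Um_def Vm_def assms(3) sum_distrib_right del: index_mult_mat(1))
  also have "\<dots> = (\<Sum>k<4. \<Sum>j<4. f k $ i * cnj (f k $ j) * w $ j)" by (rule sum.swap)
  also have "\<dots> = (\<Sum>k<4. cinner4 (f k) w * f k $ i)"
    unfolding cinner4_def by (rule sum4_cong) (simp add: sum_distrib_right sum_distrib_left mult_ac)
  finally show ?thesis .
qed

lemma parseval: assumes "onf f" "w \<in> carrier_vec 4"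
  shows "cinner4 w w = (\<Sum>k<4. cnj (cinner4 (f k) w) * cinner4 (f k) w)"
proof -
  have "cinner4 w w = (\<Sum>i<4. cnj (w $ i) * w $ i)" by (simp add: cinner4_def)
  also have "\<dots> = (\<Sum>i<4. cnj (w $ i) * (\<Sum>k<4. cinner4 (f k) w * f k $ i))"
    by (rule sum4_cong) (rule arg_cong[where f="\<lambda>u. cnj (w $ _) * u"], rule expand[OF assms])
  also have "\<dots> = (\<Sum>i<4. \<Sum>k<4. cinner4 (f k) w * (cnj (w $ i) * f k $ i))"
    by (simp add: sum_distrib_left mult_ac)
  also have "\<dots> = (\<Sum>k<4. \<Sum>i<4. cinner4 (f k) w * (cnj (w $ i) * f k $ i))"
    by (rule sum.swap)
  also have "\<dots> = (\<Sum>k<4. cinner4 (f k) w * cinner4 w (f k))"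
    by (rule sum4_cong) (simp add: cinner4_def[of w] sum_distrib_left)
  also have "\<dots> = (\<Sum>k<4. cnj (cinner4 (f k) w) * cinner4 (f k) w)"
    by (rule sum4_cong) (simp add: ci_cnj[of w] mult.commute)
  finally show ?thesis .
qed



definition NZ :: "(nat \<times> nat) list" where
  "NZ = [(0,1),(0,2),(0,3),(1,0),(1,1),(1,2),(1,3),(2,0),(2,1),(2,2),(2,3),(3,0),(3,1),(3,2),(3,3)]"
definition LL :: "(nat \<times> nat) list list" where
  "LL = [[(0, 1), (1, 0), (1, 1)], [(0, 1), (2, 0), (2, 1)], [(0, 1), (3, 0), (3, 1)], [(0, 2), (1, 0), (1, 2)], [(0, 2), (2, 0), (2, 2)], [(0, 2), (3, 0), (3, 2)], [(0, 3), (1, 0), (1, 3)], [(0, 3), (2, 0), (2, 3)], [(0, 3), (3, 0), (3, 3)], [(1, 1), (2, 2), (3, 3)], [(1, 1), (2, 3), (3, 2)], [(1, 2), (2, 1), (3, 3)], [(1, 2), (2, 3), (3, 1)], [(1, 3), (2, 1), (3, 2)], [(1, 3), (2, 2), (3, 1)]]"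
definition ldisj :: "(nat \<times> nat) list \<Rightarrow> (nat \<times> nat) list \<Rightarrow> bool" where
  "ldisj L M = list_all (\<lambda>a. \<not> list_ex (\<lambda>b. b = a) M) L"

lemma F1: "list_all (\<lambda>x. list_all (\<lambda>y. list_all (\<lambda>z.
   x \<noteq> y \<and> x \<noteq> z \<and> y \<noteq> z \<and> comm2 x y \<and> comm2 x z \<and> comm2 y z \<longrightarrow> z = mulp x y) NZ) NZ) NZ"
  by code_simp
lemma F2: "list_all (\<lambda>x. list_all (\<lambda>y. x \<noteq> y \<and> comm2 x y \<longrightarrow>
    mulp x y \<in> set NZ \<and> mulp x y \<noteq> x \<and> mulp x y \<noteq> y \<and> comm2 x (mulp x y) \<and> comm2 y (mulp x y) \<and>
    list_ex (\<lambda>L. set L = {x, y, mulp x y}) LL) NZ) NZ"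
  by code_simp
lemma F3: "list_all (\<lambda>L1. list_all (\<lambda>L2. ldisj L1 L2 \<longrightarrow> list_ex (\<lambda>L3. ldisj L3 L1 \<and> ldisj L3 L2 \<and>
   list_all (\<lambda>L4. \<not> (ldisj L4 L1 \<and> ldisj L4 L2 \<and> ldisj L4 L3)) LL) LL) LL) LL"
  by code_simp
lemma F4: "list_all (\<lambda>L1. list_all (\<lambda>L2. ldisj L1 L2 \<longrightarrow> list_all (\<lambda>r. list_ex (\<lambda>p. \<not> comm2 p r) L1) L2) LL) LL"
  by code_simp
lemma F5: "list_all (\<lambda>L. L ! 0 \<in> set NZ \<and> L ! 1 \<in> set NZ \<and> L ! 0 \<noteq> L ! 1 \<and> comm2 (L ! 0) (L ! 1) \<and>
   set L = {L ! 0, L ! 1, mulp (L ! 0) (L ! 1)}) LL"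
  by code_simp



definition valid :: "nat \<times> nat \<Rightarrow> nat \<times> nat \<Rightarrow> bool" where
  "valid x y = (x \<in> set NZ \<and> y \<in> set NZ \<and> x \<noteq> y \<and> comm2 x y)"
definition lagS :: "nat \<times> nat \<Rightarrow> nat \<times> nat \<Rightarrow> (nat \<times> nat) set" where
  "lagS x y = {x, y, mulp x y}"
definition cls :: "nat \<times> nat \<Rightarrow> nat \<times> nat \<Rightarrow> complex mat set" where
  "cls x y = pm ` lagS x y"

lemma NZ_iff: "x \<in> set NZ \<longleftrightarrow> ok x \<and> x \<noteq> (0,0)"
proof (cases x)
  case (Pair a b)
  show ?thesis
  proof
    assume "x \<in> set NZ" thus "ok x \<and> x \<noteq> (0,0)" by (auto simp: NZ_def ok_def)
  next
    assume "ok x \<and> x \<noteq> (0,0)"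
    hence "a < 4" "b < 4" "(a,b) \<noteq> (0,0)" using Pair by (auto simp: ok_def)
    thus "x \<in> set NZ" unfolding Pair
      apply (drule_tac four_cases, drule_tac four_cases)
      apply (elim disjE) by (simp_all add: NZ_def)
  qed
qed

lemma F1': "x \<in> set NZ \<Longrightarrow> y \<in> set NZ \<Longrightarrow> z \<in> set NZ \<Longrightarrow> x \<noteq> y \<Longrightarrow> x \<noteq> z \<Longrightarrow> y \<noteq> z \<Longrightarrow>
  comm2 x y \<Longrightarrow> comm2 x z \<Longrightarrow> comm2 y z \<Longrightarrow> z = mulp x y"
  using F1 unfolding list_all_iff by blast

lemma F2': assumes "valid x y"
  shows "mulp x y \<in> set NZ" "mulp x y \<noteq> x" "mulp x y \<noteq> y" "comm2 x (mulp x y)" "comm2 y (mulp x y)"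
    "\<exists>L\<in>set LL. set L = lagS x y"
  using F2 assms unfolding list_all_iff list_ex_iff valid_def lagS_def by blast+

lemma disj_iff: "ldisj L M \<longleftrightarrow> set L \<inter> set M = {}"
  by (auto simp: ldisj_def list_all_iff list_ex_iff)

lemma F3': assumes "L1 \<in> set LL" "L2 \<in> set LL" "ldisj L1 L2"
  shows "\<exists>L3\<in>set LL. ldisj L3 L1 \<and> ldisj L3 L2 \<and> (\<forall>L4\<in>set LL. \<not> (ldisj L4 L1 \<and> ldisj L4 L2 \<and> ldisj L4 L3))"
proof -
  have "\<forall>L1\<in>set LL. \<forall>L2\<in>set LL. ldisj L1 L2 \<longrightarrow> (\<exists>L3\<in>set LL. ldisj L3 L1 \<and> ldisj L3 L2 \<and>
     (\<forall>L4\<in>set LL. \<not> (ldisj L4 L1 \<and> ldisj L4 L2 \<and> ldisj L4 L3)))"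
    using F3 by (simp only: list_all_iff list_ex_iff)
  thus ?thesis using assms by blast
qed

lemma F4': assumes "L1 \<in> set LL" "L2 \<in> set LL" "ldisj L1 L2" "r \<in> set L2"
  shows "\<exists>p\<in>set L1. \<not> comm2 p r"
proof -
  have "\<forall>L1\<in>set LL. \<forall>L2\<in>set LL. ldisj L1 L2 \<longrightarrow> (\<forall>r\<in>set L2. \<exists>p\<in>set L1. \<not> comm2 p r)"
    using F4 by (simp only: list_all_iff list_ex_iff)
  thus ?thesis using assms by blast
qed

lemma F5': "L \<in> set LL \<Longrightarrow> valid (L ! 0) (L ! 1) \<and> set L = lagS (L ! 0) (L ! 1)"
  using F5 unfolding list_all_iff valid_def lagS_def by blast

lemma lagS_NZ: assumes "valid x y" "z \<in> lagS x y" shows "z \<in> set NZ"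
  using F2'(1)[OF assms(1)] assms by (auto simp: lagS_def valid_def)
lemma lagS_ok: "valid x y \<Longrightarrow> z \<in> lagS x y \<Longrightarrow> ok z"
  using lagS_NZ NZ_iff by blast

lemma comm2_refl: "comm2 x x" by (simp add: comm2_def anti1_def)

lemma pm_nonid: "z \<in> set NZ \<Longrightarrow> pm z \<in> nonid_paulis"
  unfolding nonid_paulis_def pm_def NZ_iff ok_def by (cases z) auto

lemma nonid_pm: assumes "P \<in> nonid_paulis" shows "\<exists>z\<in>set NZ. P = pm z"
proof -
  obtain k1 k2 where k: "P = pauli2 k1 k2" "k1 < 4" "k2 < 4" "(k1,k2) \<noteq> (0,0)"
    using assms unfolding nonid_paulis_def by blast
  show ?thesis by (rule bexI[of _ "(k1,k2)"]) (use k in \<open>auto simp: NZ_iff ok_def pm_def\<close>)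
qed

lemma pm_inj_NZ: "a \<in> set NZ \<Longrightarrow> b \<in> set NZ \<Longrightarrow> pm a = pm b \<longleftrightarrow> a = b"
  using pm_inj NZ_iff by blast

lemma cls_max: assumes "valid x y" shows "max_comm_class (cls x y)"
proof -
  have nz: "x \<in> set NZ" "y \<in> set NZ" "mulp x y \<in> set NZ" using assms F2'[OF assms] by (auto simp: valid_def)
  have d: "x \<noteq> y" "mulp x y \<noteq> x" "mulp x y \<noteq> y" using assms F2'[OF assms] by (auto simp: valid_def)
  have c: "comm2 x y" "comm2 x (mulp x y)" "comm2 y (mulp x y)" using assms F2'[OF assms] by (auto simp: valid_def)
  have sub: "cls x y \<subseteq> nonid_paulis" using nz pm_nonid by (auto simp: cls_def lagS_def)
  have "cls x y = {pm x, pm y, pm (mulp x y)}" by (simp add: cls_def lagS_def)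
  moreover have "pm x \<noteq> pm y" "pm x \<noteq> pm (mulp x y)" "pm y \<noteq> pm (mulp x y)"
    using d nz pm_inj_NZ by metis+
  ultimately have card: "card (cls x y) = 3" by simp
  have okk: "ok x" "ok y" "ok (mulp x y)" using nz NZ_iff by auto
  have "\<forall>P\<in>cls x y. \<forall>Q\<in>cls x y. P * Q = Q * P"
  proof (intro ballI)
    fix P Q assume "P \<in> cls x y" "Q \<in> cls x y"
    then obtain p q where pq: "p \<in> lagS x y" "q \<in> lagS x y" "P = pm p" "Q = pm q" by (auto simp: cls_def)
    have "comm2 p q" using pq(1,2) c comm2_refl[of x] comm2_refl[of y] comm2_refl[of "mulp x y"]
      comm2_sym[of x y] comm2_sym[of x "mulp x y"] comm2_sym[of y "mulp x y"] by (auto simp: lagS_def)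
    moreover have "ok p" "ok q" using pq(1,2) okk by (auto simp: lagS_def)
    ultimately show "P * Q = Q * P" using pm_comm_iff pq(3,4) by blast
  qed
  thus ?thesis using sub card by (simp add: max_comm_class_def)
qed

lemma max_cls: assumes "max_comm_class C" shows "\<exists>x y. valid x y \<and> C = cls x y"
proof -
  have sub: "C \<subseteq> nonid_paulis" and c3: "card C = 3" and cm: "\<forall>P\<in>C. \<forall>Q\<in>C. P * Q = Q * P"
    using assms by (auto simp: max_comm_class_def)
  obtain A B D where C: "C = {A, B, D}" "A \<noteq> B" "B \<noteq> D" "A \<noteq> D" using c3 card_3_iff by metis
  obtain x where x: "x \<in> set NZ" "A = pm x" using nonid_pm sub C by blast
  obtain y where y: "y \<in> set NZ" "B = pm y" using nonid_pm sub C by blast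
  obtain z where z: "z \<in> set NZ" "D = pm z" using nonid_pm sub C by blast
  have ok: "ok x" "ok y" "ok z" using x y z NZ_iff by auto
  have d: "x \<noteq> y" "x \<noteq> z" "y \<noteq> z" using C x y z by auto
  have "comm2 x y" using cm C x y pm_comm_iff[OF ok(1,2)] by auto
  moreover have "comm2 x z" using cm C x z pm_comm_iff[OF ok(1,3)] by auto
  moreover have "comm2 y z" using cm C y z pm_comm_iff[OF ok(2,3)] by auto
  ultimately have "z = mulp x y" using F1' x y z d by blast
  hence "C = cls x y" using C x y z by (simp add: cls_def lagS_def)
  moreover have "valid x y" using x y d \<open>comm2 x y\<close> by (simp add: valid_def)
  ultimately show ?thesis by blast
qed

lemma LIN: fixes A :: "complex mat" assumes "A \<in> carrier_mat 4 4" "w \<in> carrier_vec 4" "a \<in> carrier_vec 4" "c \<in> carrier_vec 4" "d \<in> carrier_vec 4"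
  shows "A *\<^sub>v vec 4 (\<lambda>i. (w$i + s1 * a$i + s2 * c$i + s3 * d$i) / 4) =
         vec 4 (\<lambda>i. ((A *\<^sub>v w)$i + s1 * (A *\<^sub>v a)$i + s2 * (A *\<^sub>v c)$i + s3 * (A *\<^sub>v d)$i) / 4)"
proof (rule eq_vecI)
  fix i assume "i < dim_vec (vec 4 (\<lambda>i. ((A *\<^sub>v w)$i + s1 * (A *\<^sub>v a)$i + s2 * (A *\<^sub>v c)$i + s3 * (A *\<^sub>v d)$i) / 4))"
  hence i: "i < 4" by simp
  have "(A *\<^sub>v vec 4 (\<lambda>i. (w$i + s1 * a$i + s2 * c$i + s3 * d$i) / 4)) $ i =
     (\<Sum>j<4. A $$ (i,j) * ((w$j + s1 * a$j + s2 * c$j + s3 * d$j) / 4))"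
    using i assms(1) by (subst mv4) (auto intro!: sum4_cong)
  also have "\<dots> = ((\<Sum>j<4. A $$ (i,j) * w$j) + s1 * (\<Sum>j<4. A $$ (i,j) * a$j) + s2 * (\<Sum>j<4. A $$ (i,j) * c$j)
      + s3 * (\<Sum>j<4. A $$ (i,j) * d$j)) / 4"
    unfolding sum4 by (simp add: field_simps)
  also have "\<dots> = ((A *\<^sub>v w)$i + s1 * (A *\<^sub>v a)$i + s2 * (A *\<^sub>v c)$i + s3 * (A *\<^sub>v d)$i) / 4"
    using assms i by (simp add: mv4 del: index_mult_mat_vec)
  finally show "(A *\<^sub>v vec 4 (\<lambda>i. (w$i + s1 * a$i + s2 * c$i + s3 * d$i) / 4)) $ i =
     vec 4 (\<lambda>i. ((A *\<^sub>v w)$i + s1 * (A *\<^sub>v a)$i + s2 * (A *\<^sub>v c)$i + s3 * (A *\<^sub>v d)$i) / 4) $ i"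
    using i by simp
qed (use assms in simp)

lemma sgn_sq: "(s::complex) = 1 \<or> s = -1 \<Longrightarrow> s * s = 1" by auto

lemma eig_scale: fixes M :: "complex mat" assumes "M \<in> carrier_mat 4 4" "v \<in> carrier_vec 4" "M *\<^sub>v v = e \<cdot>\<^sub>v v"
  shows "M *\<^sub>v (c \<cdot>\<^sub>v v) = e \<cdot>\<^sub>v (c \<cdot>\<^sub>v v)"
proof -
  have "M *\<^sub>v (c \<cdot>\<^sub>v v) = c \<cdot>\<^sub>v (M *\<^sub>v v)" by (rule mult_mat_vec[OF assms(1,2)])
  also have "\<dots> = e \<cdot>\<^sub>v (c \<cdot>\<^sub>v v)" using assms(3) by (simp add: smult_smult_assoc mult.commute)
  finally show ?thesis .
qed

lemma normalize: assumes "v \<in> carrier_vec 4" "v \<noteq> 0\<^sub>v 4"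
  shows "\<exists>c. cinner4 (c \<cdot>\<^sub>v v) (c \<cdot>\<^sub>v v) = 1"
proof -
  define n where "n = (\<Sum>i<4. (cmod (v$i))^2)"
  have n0: "n \<ge> 0" unfolding n_def by (intro sum_nonneg) auto
  have "cinner4 v v \<noteq> 0" using ci_self_zero[OF assms(1)] assms(2) by blast
  hence "n \<noteq> 0" unfolding n_def by (metis ci_self of_real_0)
  hence np: "n > 0" using n0 by simp
  define c where "c = complex_of_real (1 / sqrt n)"
  have "cinner4 (c \<cdot>\<^sub>v v) (c \<cdot>\<^sub>v v) = cnj c * c * cinner4 v v"
    using assms(1) by (simp add: ci_smult_l ci_smult_r)
  also have "\<dots> = complex_of_real ((1 / sqrt n) * (1 / sqrt n) * n)"
    unfolding c_def ci_self[of v] n_def[symmetric] by (simp only: of_real_mult complex_cnj_complex_of_real)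
  also have "\<dots> = 1"
  proof -
    have "sqrt n * sqrt n = n" using n0 by simp
    hence "(1 / sqrt n) * (1 / sqrt n) * n = 1" using np by (simp add: field_simps)
    thus ?thesis by simp
  qed
  finally show ?thesis by blast
qed

lemma unit_mv: fixes A :: "complex mat" shows "A \<in> carrier_mat 4 4 \<Longrightarrow> j < 4 \<Longrightarrow> (A *\<^sub>v unit_vec 4 j) $ j = A $$ (j,j)"
proof -
  assume A: "A \<in> carrier_mat 4 4" and j: "j < 4"
  have "(A *\<^sub>v unit_vec 4 j) $ j = (\<Sum>l<4. A $$ (j,l) * unit_vec 4 j $ l)" using A j by (simp add: mv4 del: index_mult_mat_vec)
  also have "\<dots> = (\<Sum>l<4. if l = j then A $$ (j,l) else 0)" by (rule sum4_cong) (use j in auto)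
  also have "\<dots> = A $$ (j,j)" using j by simp
  finally show ?thesis .
qed

lemma eig_exists: assumes "valid x y" and s1: "s1 = 1 \<or> s1 = -1" and s2: "s2 = 1 \<or> s2 = -1"
  shows "\<exists>u. u \<in> carrier_vec 4 \<and> cinner4 u u = 1 \<and> pm x *\<^sub>v u = s1 \<cdot>\<^sub>v u \<and> pm y *\<^sub>v u = s2 \<cdot>\<^sub>v u \<and>
    (\<exists>e. pm (mulp x y) *\<^sub>v u = e \<cdot>\<^sub>v u)"
proof -
  have nz: "x \<in> set NZ" "y \<in> set NZ" "mulp x y \<in> set NZ" using assms F2'[OF assms(1)] by (auto simp: valid_def)
  hence okk: "ok x" "ok y" "ok (mulp x y)" and nz0: "x \<noteq> (0,0)" "y \<noteq> (0,0)" "mulp x y \<noteq> (0,0)"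
    using NZ_iff by auto
  have cxy: "comm2 x y" using assms by (simp add: valid_def)
  define P where "P = pm x"
  define Q where "Q = pm y"
  define R where "R = pm (mulp x y)"
  have PC: "P \<in> carrier_mat 4 4" "Q \<in> carrier_mat 4 4" "R \<in> carrier_mat 4 4" "P * Q \<in> carrier_mat 4 4"
    unfolding P_def Q_def R_def by auto
  have PP: "P * P = 1\<^sub>m 4" "Q * Q = 1\<^sub>m 4" unfolding P_def Q_def using pm_sq okk by auto
  have PQc: "Q * P = P * Q" unfolding P_def Q_def using pm_comm_iff[OF okk(1,2)] cxy by simp
  have PQR: "P * Q = ph x y \<cdot>\<^sub>m R" unfolding P_def Q_def R_def using pm_mult okk by simp
  have "\<exists>j<4. (1 + s1 * P $$ (j,j) + s2 * Q $$ (j,j) + s1 * s2 * (P * Q) $$ (j,j)) / 4 \<noteq> 0"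
  proof (rule ccontr)
    assume "\<not> ?thesis"
    hence "(\<Sum>j<4. (1 + s1 * P $$ (j,j) + s2 * Q $$ (j,j) + s1 * s2 * (P * Q) $$ (j,j)) / 4) = 0" by simp
    moreover have "(\<Sum>j<4. (1 + s1 * P $$ (j,j) + s2 * Q $$ (j,j) + s1 * s2 * (P * Q) $$ (j,j)) / 4) =
       (4 + s1 * (\<Sum>j<4. P $$ (j,j)) + s2 * (\<Sum>j<4. Q $$ (j,j)) + s1 * s2 * ph x y * (\<Sum>j<4. R $$ (j,j))) / 4"
    proof -
      have "(\<Sum>j<4. (1 + s1 * P $$ (j,j) + s2 * Q $$ (j,j) + s1 * s2 * (P * Q) $$ (j,j)) / 4) =
         (\<Sum>j<4. (1 + s1 * P $$ (j,j) + s2 * Q $$ (j,j) + s1 * s2 * (ph x y * R $$ (j,j))) / 4)"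
        by (rule sum4_cong) (use PC in \<open>simp add: PQR\<close>)
      also have "\<dots> = (4 + s1 * (\<Sum>j<4. P $$ (j,j)) + s2 * (\<Sum>j<4. Q $$ (j,j)) + s1 * s2 * ph x y * (\<Sum>j<4. R $$ (j,j))) / 4"
        unfolding sum4 by (simp add: field_simps)
      finally show ?thesis .
    qed
    moreover have "(\<Sum>j<4. P $$ (j,j)) = 0" "(\<Sum>j<4. Q $$ (j,j)) = 0" "(\<Sum>j<4. R $$ (j,j)) = 0"
      unfolding P_def Q_def R_def using pm_trace okk nz0 by auto
    ultimately show False by simp
  qed
  then obtain j where j: "j < 4" "(1 + s1 * P $$ (j,j) + s2 * Q $$ (j,j) + s1 * s2 * (P * Q) $$ (j,j)) / 4 \<noteq> 0"
    by blast
  define w where "w = (unit_vec 4 j :: complex vec)"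
  define a where "a = P *\<^sub>v w"
  define c where "c = Q *\<^sub>v w"
  define d where "d = (P * Q) *\<^sub>v w"
  have wc: "w \<in> carrier_vec 4" "a \<in> carrier_vec 4" "c \<in> carrier_vec 4" "d \<in> carrier_vec 4"
    unfolding w_def a_def c_def d_def P_def Q_def by (auto intro!: carrier_vecI)
  have Pa: "P *\<^sub>v a = w" unfolding a_def using PC PP wc by (simp flip: assoc_mult_mat_vec)
  have Pc: "P *\<^sub>v c = d" unfolding c_def d_def using PC wc by (simp flip: assoc_mult_mat_vec)
  have Pd: "P *\<^sub>v d = c"
  proof -
    have "P *\<^sub>v d = (P * (P * Q)) *\<^sub>v w" unfolding d_def
      by (rule assoc_mult_mat_vec[symmetric]) (use PC wc in auto)
    also have "P * (P * Q) = (P * P) * Q" by (rule assoc_mult_mat[symmetric]) (use PC in auto)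
    also have "\<dots> = Q" using PP PC by (simp add: carrier_matD del: assoc_mult_mat)
    finally show ?thesis unfolding c_def .
  qed
  have Qw: "Q *\<^sub>v w = c" unfolding c_def ..
  have Qa: "Q *\<^sub>v a = d" unfolding a_def d_def using PC PQc wc by (simp flip: assoc_mult_mat_vec)
  have Qc: "Q *\<^sub>v c = w" unfolding c_def using PC PP wc by (simp flip: assoc_mult_mat_vec)
  have Qd: "Q *\<^sub>v d = a"
  proof -
    have "Q *\<^sub>v d = (Q * (P * Q)) *\<^sub>v w" unfolding d_def
      by (rule assoc_mult_mat_vec[symmetric]) (use PC wc in auto)
    also have "Q * (P * Q) = (Q * P) * Q" by (rule assoc_mult_mat[symmetric]) (use PC in auto)
    also have "\<dots> = (P * Q) * Q" using PQc by simp
    also have "\<dots> = P * (Q * Q)" by (rule assoc_mult_mat) (use PC in auto)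
    also have "\<dots> = P" using PP PC by (simp add: carrier_matD)
    finally show ?thesis unfolding a_def .
  qed
  define v where "v = vec 4 (\<lambda>i. (w$i + s1 * a$i + s2 * c$i + (s1 * s2) * d$i) / 4)"
  have vc: "v \<in> carrier_vec 4" unfolding v_def by simp
  have s11: "s1 * s1 = 1" "s2 * s2 = 1" using s1 s2 by auto
  have Pv: "P *\<^sub>v v = s1 \<cdot>\<^sub>v v"
  proof -
    have "P *\<^sub>v v = vec 4 (\<lambda>i. ((P *\<^sub>v w)$i + s1 * (P *\<^sub>v a)$i + s2 * (P *\<^sub>v c)$i + (s1 * s2) * (P *\<^sub>v d)$i) / 4)"
      unfolding v_def by (rule LIN) (use PC wc in auto)
    also have "\<dots> = vec 4 (\<lambda>i. (a$i + s1 * w$i + s2 * d$i + (s1 * s2) * c$i) / 4)"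
      unfolding Pa Pc Pd a_def[symmetric] ..
    also have "\<dots> = s1 \<cdot>\<^sub>v v" unfolding v_def
      by (rule eq_vecI) (use s1 s2 in \<open>auto simp: algebra_simps\<close>)
    finally show ?thesis .
  qed
  have Qv: "Q *\<^sub>v v = s2 \<cdot>\<^sub>v v"
  proof -
    have "Q *\<^sub>v v = vec 4 (\<lambda>i. ((Q *\<^sub>v w)$i + s1 * (Q *\<^sub>v a)$i + s2 * (Q *\<^sub>v c)$i + (s1 * s2) * (Q *\<^sub>v d)$i) / 4)"
      unfolding v_def by (rule LIN) (use PC wc in auto)
    also have "\<dots> = vec 4 (\<lambda>i. (c$i + s1 * d$i + s2 * w$i + (s1 * s2) * a$i) / 4)"
      unfolding Qw Qa Qc Qd ..
    also have "\<dots> = s2 \<cdot>\<^sub>v v" unfolding v_def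
      by (rule eq_vecI) (use s1 s2 in \<open>auto simp: algebra_simps\<close>)
    finally show ?thesis .
  qed
  have Rv: "R *\<^sub>v v = (s1 * s2 / ph x y) \<cdot>\<^sub>v v"
  proof -
    have "(P * Q) *\<^sub>v v = (s1 * s2) \<cdot>\<^sub>v v" using PC vc Pv Qv
      by (simp add: mult_mat_vec smult_smult_assoc mult.commute)
    hence "ph x y \<cdot>\<^sub>v (R *\<^sub>v v) = (s1 * s2) \<cdot>\<^sub>v v" using PQR smult_mat_mv[OF PC(3) vc] by simp
    hence "(1 / ph x y) \<cdot>\<^sub>v (ph x y \<cdot>\<^sub>v (R *\<^sub>v v)) = (1 / ph x y) \<cdot>\<^sub>v ((s1 * s2) \<cdot>\<^sub>v v)" by simp
    thus ?thesis using ph_nz[of x y] by (simp add: smult_smult_assoc)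
  qed
  have vj: "v $ j \<noteq> 0"
  proof -
    have "v $ j = (w$j + s1 * a$j + s2 * c$j + (s1 * s2) * d$j) / 4" using j unfolding v_def by simp
    also have "\<dots> = (1 + s1 * P $$ (j,j) + s2 * Q $$ (j,j) + s1 * s2 * (P * Q) $$ (j,j)) / 4"
      using unit_mv[OF PC(1) j(1)] unit_mv[OF PC(2) j(1)] unit_mv[OF PC(4) j(1)] j(1)
      unfolding w_def a_def c_def d_def by simp
    finally have vjeq: "v $ j = (1 + s1 * P $$ (j,j) + s2 * Q $$ (j,j) + s1 * s2 * (P * Q) $$ (j,j)) / 4" .
    show ?thesis unfolding vjeq by (rule j(2))
  qed
  hence vnz: "v \<noteq> 0\<^sub>v 4" using j by auto
  obtain k where k: "cinner4 (k \<cdot>\<^sub>v v) (k \<cdot>\<^sub>v v) = 1" using normalize[OF vc vnz] by blast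
  show ?thesis
  proof (intro exI conjI)
    show "k \<cdot>\<^sub>v v \<in> carrier_vec 4" using vc by simp
    show "cinner4 (k \<cdot>\<^sub>v v) (k \<cdot>\<^sub>v v) = 1" by (rule k)
    show "pm x *\<^sub>v (k \<cdot>\<^sub>v v) = s1 \<cdot>\<^sub>v (k \<cdot>\<^sub>v v)" using eig_scale[OF PC(1) vc Pv] P_def by simp
    show "pm y *\<^sub>v (k \<cdot>\<^sub>v v) = s2 \<cdot>\<^sub>v (k \<cdot>\<^sub>v v)" using eig_scale[OF PC(2) vc Qv] Q_def by simp
    show "pm (mulp x y) *\<^sub>v (k \<cdot>\<^sub>v v) = (s1 * s2 / ph x y) \<cdot>\<^sub>v (k \<cdot>\<^sub>v v)"
      using eig_scale[OF PC(3) vc Rv] R_def by simp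
  qed
qed




lemma EX: assumes "valid x y" shows "\<exists>B. common_eigenbasis (cls x y) B"
proof -
  have okk: "ok x" "ok y" using assms NZ_iff by (auto simp: valid_def)
  obtain u1 where u1: "u1 \<in> carrier_vec 4" "cinner4 u1 u1 = 1" "pm x *\<^sub>v u1 = 1 \<cdot>\<^sub>v u1" "pm y *\<^sub>v u1 = 1 \<cdot>\<^sub>v u1"
      "\<exists>e. pm (mulp x y) *\<^sub>v u1 = e \<cdot>\<^sub>v u1" using eig_exists[OF assms, of 1 1] by auto
  obtain u2 where u2: "u2 \<in> carrier_vec 4" "cinner4 u2 u2 = 1" "pm x *\<^sub>v u2 = 1 \<cdot>\<^sub>v u2" "pm y *\<^sub>v u2 = (-1) \<cdot>\<^sub>v u2"
      "\<exists>e. pm (mulp x y) *\<^sub>v u2 = e \<cdot>\<^sub>v u2" using eig_exists[OF assms, of 1 "-1"] by auto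
  obtain u3 where u3: "u3 \<in> carrier_vec 4" "cinner4 u3 u3 = 1" "pm x *\<^sub>v u3 = (-1) \<cdot>\<^sub>v u3" "pm y *\<^sub>v u3 = 1 \<cdot>\<^sub>v u3"
      "\<exists>e. pm (mulp x y) *\<^sub>v u3 = e \<cdot>\<^sub>v u3" using eig_exists[OF assms, of "-1" 1] by auto
  obtain u4 where u4: "u4 \<in> carrier_vec 4" "cinner4 u4 u4 = 1" "pm x *\<^sub>v u4 = (-1) \<cdot>\<^sub>v u4" "pm y *\<^sub>v u4 = (-1) \<cdot>\<^sub>v u4"
      "\<exists>e. pm (mulp x y) *\<^sub>v u4 = e \<cdot>\<^sub>v u4" using eig_exists[OF assms, of "-1" "-1"] by auto
  have o12: "cinner4 u1 u2 = 0" by (rule ev_orth[OF okk(2) u1(1) u2(1) u1(4) u2(4)]) auto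
  have o13: "cinner4 u1 u3 = 0" by (rule ev_orth[OF okk(1) u1(1) u3(1) u1(3) u3(3)]) auto
  have o14: "cinner4 u1 u4 = 0" by (rule ev_orth[OF okk(1) u1(1) u4(1) u1(3) u4(3)]) auto
  have o23: "cinner4 u2 u3 = 0" by (rule ev_orth[OF okk(1) u2(1) u3(1) u2(3) u3(3)]) auto
  have o24: "cinner4 u2 u4 = 0" by (rule ev_orth[OF okk(1) u2(1) u4(1) u2(3) u4(3)]) auto
  have o34: "cinner4 u3 u4 = 0" by (rule ev_orth[OF okk(2) u3(1) u4(1) u3(4) u4(4)]) auto
  have o21: "cinner4 u2 u1 = 0" "cinner4 u3 u1 = 0" "cinner4 u4 u1 = 0" "cinner4 u3 u2 = 0"
    "cinner4 u4 u2 = 0" "cinner4 u4 u3 = 0"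
    using o12 o13 o14 o23 o24 o34 ci_cnj by (metis complex_cnj_zero)+
  have ne: "u1 \<noteq> u2" "u1 \<noteq> u3" "u1 \<noteq> u4" "u2 \<noteq> u3" "u2 \<noteq> u4" "u3 \<noteq> u4"
    using o12 o13 o14 o23 o24 o34 u1(2) u2(2) u3(2) by auto
  define B where "B = {u1, u2, u3, u4}"
  have "orthonormal_basis4 B"
    unfolding orthonormal_basis4_def B_def
    using u1(1,2) u2(1,2) u3(1,2) u4(1,2) o12 o13 o14 o23 o24 o34 o21 ne by auto
  moreover have "\<forall>P\<in>cls x y. \<forall>w\<in>B. \<exists>ev. P *\<^sub>v w = ev \<cdot>\<^sub>v w"
    unfolding cls_def lagS_def B_def using u1(3-5) u2(3-5) u3(3-5) u4(3-5) by blast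
  ultimately show ?thesis unfolding common_eigenbasis_def by blast
qed

lemma ceD: assumes "common_eigenbasis C B" "b \<in> B"
  shows "b \<in> carrier_vec 4" "cinner4 b b = 1" "b \<noteq> 0\<^sub>v 4"
proof -
  show bc: "b \<in> carrier_vec 4" using assms by (auto simp: common_eigenbasis_def orthonormal_basis4_def)
  show b1: "cinner4 b b = 1" using assms by (auto simp: common_eigenbasis_def orthonormal_basis4_def)
  show "b \<noteq> 0\<^sub>v 4"
  proof
    assume "b = 0\<^sub>v 4"
    hence "cinner4 b b = 0" by (simp add: cinner4_def)
    with b1 show False by simp
  qed
qed

lemma ceE: assumes "common_eigenbasis C B" "b \<in> B" "pm p \<in> C" "ok p"
  shows "\<exists>e. pm p *\<^sub>v b = e \<cdot>\<^sub>v b \<and> (e = 1 \<or> e = -1)"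
proof -
  obtain e where e: "pm p *\<^sub>v b = e \<cdot>\<^sub>v b" using assms by (auto simp: common_eigenbasis_def)
  moreover have "e = 1 \<or> e = -1" by (rule ev_pm1[OF assms(4) ceD(1,3)[OF assms(1,2)] e])
  ultimately show ?thesis by blast
qed

definition idx :: "nat \<times> nat \<Rightarrow> nat \<times> nat \<Rightarrow> nat \<Rightarrow> nat \<times> nat" where
  "idx u v k = [(0,0), u, v, mulp u v] ! k"

lemma four_cases': "(k::nat) < 4 \<Longrightarrow> k = 0 \<or> k = 1 \<or> k = 2 \<or> k = 3" by auto

lemma idx_props: assumes "valid u v" "k < 4"
  shows "ok (idx u v k)" "k \<noteq> 0 \<Longrightarrow> idx u v k \<in> lagS u v" "idx u v 0 = (0,0)"
proof -
  have ok: "ok u" "ok v" "ok (mulp u v)" using assms(1) lagS_ok by (auto simp: lagS_def)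
  show "ok (idx u v k)" using four_cases'[OF assms(2)] ok ok_0 by (auto simp: idx_def)
  show "k \<noteq> 0 \<Longrightarrow> idx u v k \<in> lagS u v" using four_cases'[OF assms(2)] by (auto simp: idx_def lagS_def)
  show "idx u v 0 = (0,0)" by (simp add: idx_def)
qed

lemma idx_mul: assumes "valid u v" "k < 4" "l < 4" "k \<noteq> l"
  shows "mulp (idx u v k) (idx u v l) \<in> lagS u v"
proof -
  have ok: "ok u" "ok v" using assms(1) lagS_ok by (auto simp: lagS_def)
  have m1: "mulp u (mulp u v) = v" using mulp_inv ok by blast
  have m2: "mulp v (mulp u v) = u" using mulp_inv ok mulp_comm by metis
  have m3: "mulp (mulp u v) u = v" "mulp (mulp u v) v = u" using m1 m2 mulp_comm by metis+
  have m0: "mulp w (0,0) = w" for w using mulp_0 mulp_comm by metis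
  show ?thesis using four_cases'[OF assms(2)] four_cases'[OF assms(3)] assms(4)
    by (auto simp: idx_def lagS_def mulp_0 m0 m1 m2 m3 mulp_comm[of v u])
qed

lemma ALL_EIG: fixes A :: "complex mat"
  assumes f: "onf f" and A: "A \<in> carrier_mat 4 4" and ev: "\<forall>k<4. A *\<^sub>v f k = e \<cdot>\<^sub>v f k" and j: "j < 4"
  shows "A $$ (j,j) = e"
proof -
  define w where "w = (unit_vec 4 j :: complex vec)"
  have wc: "w \<in> carrier_vec 4" unfolding w_def by simp
  have fc: "\<And>k. k < 4 \<Longrightarrow> f k \<in> carrier_vec 4" using f by (simp add: onf_def)
  have fd: "\<And>k. k < 4 \<Longrightarrow> dim_vec (f k) = 4" using fc by auto
  have "A $$ (j,j) = (A *\<^sub>v w) $ j" unfolding w_def using unit_mv[OF A j] by simp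
  also have "\<dots> = (\<Sum>l<4. A $$ (j,l) * w $ l)" using A wc j by (simp add: mv4 del: index_mult_mat_vec)
  also have "\<dots> = (\<Sum>l<4. A $$ (j,l) * (\<Sum>k<4. cinner4 (f k) w * f k $ l))"
    by (rule sum4_cong) (rule arg_cong[where f="\<lambda>u. A $$ (j,_) * u"], rule expand[OF f wc])
  also have "\<dots> = (\<Sum>l<4. \<Sum>k<4. cinner4 (f k) w * (A $$ (j,l) * f k $ l))"
    by (simp add: sum_distrib_left mult_ac)
  also have "\<dots> = (\<Sum>k<4. \<Sum>l<4. cinner4 (f k) w * (A $$ (j,l) * f k $ l))" by (rule sum.swap)
  also have "\<dots> = (\<Sum>k<4. cinner4 (f k) w * (A *\<^sub>v f k) $ j)"
    by (rule sum4_cong) (use A j fc in \<open>simp add: mv4 sum_distrib_left del: index_mult_mat_vec\<close>)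
  also have "\<dots> = (\<Sum>k<4. e * (cinner4 (f k) w * f k $ j))"
    by (rule sum4_cong) (use ev fd j in \<open>simp add: mult_ac\<close>)
  also have "\<dots> = e * w $ j" using expand[OF f wc j] by (simp add: sum_distrib_left)
  also have "\<dots> = e" unfolding w_def using j by simp
  finally show ?thesis .
qed

lemma NU: assumes z: "z \<in> set NZ" and zC: "pm z \<in> C" "pm z \<in> C'"
  and ce: "common_eigenbasis C B" "common_eigenbasis C' B'" and ub: "unbiased B B'"
  shows False
proof -
  have okz: "ok z" "z \<noteq> (0,0)" using z NZ_iff by auto
  have cB: "card B = 4" "card B' = 4" using ce by (auto simp: common_eigenbasis_def orthonormal_basis4_def)
  hence "B \<noteq> {}" by auto
  then obtain b where b: "b \<in> B" by blast
  obtain e where e: "pm z *\<^sub>v b = e \<cdot>\<^sub>v b" "e = 1 \<or> e = -1" using ceE[OF ce(1) b zC(1) okz(1)] by blast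
  have all: "pm z *\<^sub>v b' = e \<cdot>\<^sub>v b'" if b': "b' \<in> B'" for b'
  proof -
    obtain e' where e': "pm z *\<^sub>v b' = e' \<cdot>\<^sub>v b'" "e' = 1 \<or> e' = -1" using ceE[OF ce(2) b' zC(2) okz(1)] by blast
    have "e' = e"
    proof (rule ccontr)
      assume "e' \<noteq> e"
      hence "cinner4 b b' = 0"
        by (intro ev_orth[OF okz(1) ceD(1)[OF ce(1) b] ceD(1)[OF ce(2) b'] e(1) e'(1)]) (use e(2) in auto)
      moreover have "cmod (cinner4 b b') = 1 / sqrt 4" using ub b b' by (auto simp: unbiased_def)
      ultimately show False by simp
    qed
    thus ?thesis using e' by simp
  qed
  have fin: "finite B'" using cB(2) card.infinite by fastforce
  obtain h where h: "bij_betw h {0..<(4::nat)} B'" using ex_bij_betw_nat_finite[OF fin] cB(2) by auto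
  have hB: "\<And>k. k < 4 \<Longrightarrow> h k \<in> B'" using h by (auto simp: bij_betw_def)
  have hinj: "\<And>k l. k < 4 \<Longrightarrow> l < 4 \<Longrightarrow> h k = h l \<longleftrightarrow> k = l" using h by (auto simp: bij_betw_def inj_on_def)
  have "onf h"
    unfolding onf_def
  proof (intro conjI allI impI)
    fix k :: nat assume "k < 4" thus "h k \<in> carrier_vec 4" using hB ce(2) by (auto simp: common_eigenbasis_def orthonormal_basis4_def)
  next
    fix k l :: nat assume kl: "k < 4" "l < 4"
    have "cinner4 (h k) (h l) = (if h k = h l then 1 else 0)" using hB[OF kl(1)] hB[OF kl(2)] ce(2)
      by (auto simp: common_eigenbasis_def orthonormal_basis4_def)
    thus "cinner4 (h k) (h l) = (if k = l then 1 else 0)" using hinj[OF kl] by simp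
  qed
  hence diag: "\<And>j. j < 4 \<Longrightarrow> pm z $$ (j,j) = e"
    using ALL_EIG[of h "pm z" e] all hB by auto
  have "(\<Sum>j<4. pm z $$ (j,j)) = 4 * e" by (simp add: diag)
  moreover have "(\<Sum>j<4. pm z $$ (j,j)) = 0" using pm_trace okz by blast
  ultimately show False using e(2) by auto
qed

lemma sqrt4: "sqrt 4 = 2" by (rule real_sqrt_unique) auto

lemma UB: assumes vxy: "valid x y" and vuv: "valid u v" and dj: "lagS x y \<inter> lagS u v = {}"
  and ce: "common_eigenbasis (cls x y) B" "common_eigenbasis (cls u v) B'"
  shows "unbiased B B'"
proof -
  have OB: "orthonormal_basis4 B" "orthonormal_basis4 B'" using ce by (auto simp: common_eigenbasis_def)
  obtain L1 where L1: "L1 \<in> set LL" "set L1 = lagS x y" using F2'(6)[OF vxy] by blast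
  obtain L2 where L2: "L2 \<in> set LL" "set L2 = lagS u v" using F2'(6)[OF vuv] by blast
  have dL: "ldisj L1 L2" using dj L1 L2 by (simp add: disj_iff)
  have "cmod (cinner4 b b') = 1 / sqrt 4" if b: "b \<in> B" and b': "b' \<in> B'" for b b'
  proof -
    have bc: "b \<in> carrier_vec 4" "cinner4 b b = 1" using ceD[OF ce(1) b] by auto
    have bc': "b' \<in> carrier_vec 4" "cinner4 b' b' = 1" using ceD[OF ce(2) b'] by auto
    define f where "f k = pm (idx u v k) *\<^sub>v b" for k
    have onf: "onf f" unfolding onf_def
    proof (intro conjI allI impI)
      fix k :: nat assume "k < 4" show "f k \<in> carrier_vec 4" unfolding f_def by simp
    next
      fix k l :: nat assume kl: "k < 4" "l < 4"
      let ?p = "idx u v k" and ?q = "idx u v l"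
      have okp: "ok ?p" "ok ?q" using idx_props[OF vuv] kl by auto
      have "cinner4 (f k) (f l) = cinner4 b (pm ?p *\<^sub>v (pm ?q *\<^sub>v b))"
        unfolding f_def using bc by (subst herm_inner[OF _ pm_herm[OF okp(1)]]) auto
      also have "\<dots> = cinner4 b ((pm ?p * pm ?q) *\<^sub>v b)"
        using assoc_mult_mat_vec[of "pm ?p" 4 4 "pm ?q" 4 b] bc by simp
      also have "\<dots> = (if k = l then 1 else 0)"
      proof (cases "k = l")
        case True
        thus ?thesis using pm_sq[OF okp(1)] bc by simp
      next
        case False
        let ?r = "mulp ?p ?q"
        have rL: "?r \<in> set L2" using idx_mul[OF vuv kl False] L2 by simp
        have okr: "ok ?r" using ok_mulp okp by blast
        obtain p where p: "p \<in> set L1" "\<not> comm2 p ?r" using F4'[OF L1(1) L2(1) dL rL] by blast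
        have pL: "p \<in> lagS x y" using p L1 by simp
        have okp': "ok p" using lagS_ok[OF vxy pL] .
        have "pm p \<in> cls x y" using pL by (simp add: cls_def)
        then obtain l where l: "pm p *\<^sub>v b = l \<cdot>\<^sub>v b" "l = 1 \<or> l = -1" using ceE[OF ce(1) b _ okp'] by blast
        have z: "cinner4 b (pm ?r *\<^sub>v b) = 0" by (rule ev_anti[OF okp' okr p(2) bc(1) l])
        have "cinner4 b ((pm ?p * pm ?q) *\<^sub>v b) = cinner4 b ((ph ?p ?q \<cdot>\<^sub>m pm ?r) *\<^sub>v b)"
          using pm_mult[OF okp] by simp
        also have "\<dots> = ph ?p ?q * cinner4 b (pm ?r *\<^sub>v b)" using bc by (simp add: smult_mat_mv ci_smult_r)
        finally show ?thesis using z False by simp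
      qed
      finally show "cinner4 (f k) (f l) = (if k = l then 1 else 0)" .
    qed
    define zz where "zz = cinner4 b b'"
    have trm: "cnj (cinner4 (f k) b') * cinner4 (f k) b' = cnj zz * zz" if k: "k < 4" for k
    proof -
      have okk: "ok (idx u v k)" using idx_props[OF vuv k] by simp
      obtain mu where mu: "pm (idx u v k) *\<^sub>v b' = mu \<cdot>\<^sub>v b'" "mu = 1 \<or> mu = -1"
      proof (cases "k = 0")
        case True
        hence "pm (idx u v k) = 1\<^sub>m 4" using idx_props[OF vuv k] pm_00 by simp
        hence "pm (idx u v k) *\<^sub>v b' = 1 \<cdot>\<^sub>v b'" using bc' by simp
        thus ?thesis using that by blast
      next
        case False
        hence "pm (idx u v k) \<in> cls u v" using idx_props[OF vuv k] by (simp add: cls_def)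
        thus ?thesis using ceE[OF ce(2) b' _ okk] that by blast
      qed
      have "cinner4 (f k) b' = cinner4 b (pm (idx u v k) *\<^sub>v b')"
        unfolding f_def using bc bc' by (subst herm_inner[OF _ pm_herm[OF okk]]) auto
      also have "\<dots> = mu * zz" unfolding zz_def mu(1) using bc' by (simp add: ci_smult_r)
      finally have "cinner4 (f k) b' = mu * zz" .
      moreover have "cnj mu * mu = 1" using mu(2) by auto
      ultimately show ?thesis by (simp add: algebra_simps)
    qed
    have "1 = cinner4 b' b'" using bc' by simp
    also have "\<dots> = (\<Sum>k<4. cnj (cinner4 (f k) b') * cinner4 (f k) b')" by (rule parseval[OF onf bc'(1)])
    also have "\<dots> = (\<Sum>k<4::nat. cnj zz * zz)" by (rule sum4_cong) (rule trm)
    also have "\<dots> = 4 * (cnj zz * zz)" by simp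
    also have "\<dots> = complex_of_real (4 * (cmod zz)^2)"
    proof -
      have nc: "cnj zz * zz = complex_of_real ((cmod zz)^2)" by (simp only: complex_norm_square mult.commute)
      show ?thesis unfolding of_real_mult by (simp only: nc of_real_numeral)
    qed
    finally have "4 * (cmod zz)^2 = 1" by (metis of_real_eq_1_iff)
    hence "(cmod zz)^2 = (1/2)^2" by (simp add: power2_eq_square)
    hence "cmod zz = 1/2" by (simp add: power2_eq_iff_nonneg)
    thus ?thesis unfolding zz_def sqrt4 by simp
  qed
  thus ?thesis using OB by (simp add: unbiased_def)
qed



lemma cls_disj: assumes "valid a b" "valid c d" "lagS a b \<inter> lagS c d = {}"
  shows "cls a b \<inter> cls c d = {}"
proof (rule ccontr)
  assume "cls a b \<inter> cls c d \<noteq> {}"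
  then obtain s t where st: "s \<in> lagS a b" "t \<in> lagS c d" "pm s = pm t" by (auto simp: cls_def)
  have "s = t" using pm_inj[OF lagS_ok[OF assms(1) st(1)] lagS_ok[OF assms(2) st(2)] st(3)] .
  thus False using st assms(3) by auto
qed

lemma three_cases: "(i::nat) < 3 \<Longrightarrow> i = 0 \<or> i = 1 \<or> i = 2" by auto

theorem corollary1:
  assumes "max_comm_class C1" and "max_comm_class C2" and "C1 \<inter> C2 = {}"
  shows "\<exists>C3. max_comm_class C3 \<and> C3 \<inter> C1 = {} \<and> C3 \<inter> C2 = {} \<and>
           weakly_unextendible_pauli_mubs [C1, C2, C3]"
proof -
  obtain x1 y1 where v1: "valid x1 y1" "C1 = cls x1 y1" using max_cls[OF assms(1)] by blast
  obtain x2 y2 where v2: "valid x2 y2" "C2 = cls x2 y2" using max_cls[OF assms(2)] by blast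
  have d12: "lagS x1 y1 \<inter> lagS x2 y2 = {}"
  proof (rule ccontr)
    assume "lagS x1 y1 \<inter> lagS x2 y2 \<noteq> {}"
    then obtain t where "t \<in> lagS x1 y1" "t \<in> lagS x2 y2" by blast
    hence "pm t \<in> C1" "pm t \<in> C2" using v1 v2 by (auto simp: cls_def)
    thus False using assms(3) by blast
  qed
  obtain L1 where L1: "L1 \<in> set LL" "set L1 = lagS x1 y1" using F2'(6)[OF v1(1)] by blast
  obtain L2 where L2: "L2 \<in> set LL" "set L2 = lagS x2 y2" using F2'(6)[OF v2(1)] by blast
  have "ldisj L1 L2" using d12 L1 L2 by (simp add: disj_iff)
  then obtain L3 where L3: "L3 \<in> set LL" "ldisj L3 L1" "ldisj L3 L2"
    "\<forall>L4\<in>set LL. \<not> (ldisj L4 L1 \<and> ldisj L4 L2 \<and> ldisj L4 L3)"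
    using F3'[OF L1(1) L2(1)] by blast
  define x3 where "x3 = L3 ! 0"
  define y3 where "y3 = L3 ! 1"
  have v3: "valid x3 y3" "set L3 = lagS x3 y3" using F5'[OF L3(1)] by (simp_all add: x3_def y3_def)
  define C3 where "C3 = cls x3 y3"
  have d31: "lagS x3 y3 \<inter> lagS x1 y1 = {}" using L3(2) L1(2) v3(2) by (simp add: disj_iff)
  have d32: "lagS x3 y3 \<inter> lagS x2 y2 = {}" using L3(3) L2(2) v3(2) by (simp add: disj_iff)
  have d21: "lagS x2 y2 \<inter> lagS x1 y1 = {}" using d12 by blast
  have d13: "lagS x1 y1 \<inter> lagS x3 y3 = {}" using d31 by blast
  have d23: "lagS x2 y2 \<inter> lagS x3 y3 = {}" using d32 by blast
  have m3: "max_comm_class C3" unfolding C3_def by (rule cls_max[OF v3(1)])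
  have c31: "C3 \<inter> C1 = {}" unfolding C3_def v1(2) by (rule cls_disj[OF v3(1) v1(1) d31])
  have c32: "C3 \<inter> C2 = {}" unfolding C3_def v2(2) by (rule cls_disj[OF v3(1) v2(1) d32])
  have wu: "weakly_unextendible_pauli_mubs [C1, C2, C3]"
    unfolding weakly_unextendible_pauli_mubs_def
  proof (rule conjI)
    obtain B1 where B1: "common_eigenbasis C1 B1" using EX[OF v1(1)] v1(2) by blast
    obtain B2 where B2: "common_eigenbasis C2 B2" using EX[OF v2(1)] v2(2) by blast
    obtain B3 where B3: "common_eigenbasis C3 B3" using EX[OF v3(1)] C3_def by blast
    show "\<exists>Bs. length Bs = length [C1, C2, C3] \<and> (\<forall>i<length [C1, C2, C3]. common_eigenbasis ([C1, C2, C3] ! i) (Bs ! i))"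
    proof (intro exI[of _ "[B1, B2, B3]"] conjI allI impI)
      fix i assume "i < length [C1, C2, C3]"
      hence "i = 0 \<or> i = 1 \<or> i = 2" by auto
      thus "common_eigenbasis ([C1, C2, C3] ! i) ([B1, B2, B3] ! i)" using B1 B2 B3 by auto
    qed simp
  next
    show "\<forall>Bs. length Bs = length [C1, C2, C3] \<and>
      (\<forall>i<length [C1, C2, C3]. common_eigenbasis ([C1, C2, C3] ! i) (Bs ! i)) \<longrightarrow>
      (\<forall>i<length [C1, C2, C3]. \<forall>j<length [C1, C2, C3]. i \<noteq> j \<longrightarrow> unbiased (Bs ! i) (Bs ! j)) \<and>
      \<not> (\<exists>C B. max_comm_class C \<and> common_eigenbasis C B \<and> (\<forall>i<length [C1, C2, C3]. unbiased B (Bs ! i)))"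
  proof (intro allI impI)
    fix Bs assume H: "length Bs = length [C1, C2, C3] \<and>
      (\<forall>i<length [C1, C2, C3]. common_eigenbasis ([C1, C2, C3] ! i) (Bs ! i))"
    have h2: "\<forall>i<3. common_eigenbasis ([C1, C2, C3] ! i) (Bs ! i)" using H by simp
    have ce1: "common_eigenbasis (cls x1 y1) (Bs ! 0)" using spec[OF h2, of 0] v1(2) by simp
    have ce2: "common_eigenbasis (cls x2 y2) (Bs ! 1)" using spec[OF h2, of 1] v2(2) by simp
    have ce3: "common_eigenbasis (cls x3 y3) (Bs ! 2)" using spec[OF h2, of 2] unfolding C3_def by simp
    show "(\<forall>i<length [C1, C2, C3]. \<forall>j<length [C1, C2, C3]. i \<noteq> j \<longrightarrow> unbiased (Bs ! i) (Bs ! j)) \<and>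
      \<not> (\<exists>C B. max_comm_class C \<and> common_eigenbasis C B \<and> (\<forall>i<length [C1, C2, C3]. unbiased B (Bs ! i)))"
    proof (rule conjI)
    show "\<forall>i<length [C1, C2, C3]. \<forall>j<length [C1, C2, C3]. i \<noteq> j \<longrightarrow> unbiased (Bs ! i) (Bs ! j)"
    proof (intro allI impI)
      fix i j assume ij: "i < length [C1, C2, C3]" "j < length [C1, C2, C3]" "i \<noteq> j"
      have "i = 0 \<or> i = 1 \<or> i = 2" "j = 0 \<or> j = 1 \<or> j = 2" using ij by auto
      thus "unbiased (Bs ! i) (Bs ! j)"
        using ij(3) UB[OF v1(1) v2(1) d12 ce1 ce2] UB[OF v2(1) v1(1) d21 ce2 ce1]
          UB[OF v1(1) v3(1) d13 ce1 ce3] UB[OF v3(1) v1(1) d31 ce3 ce1]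
          UB[OF v2(1) v3(1) d23 ce2 ce3] UB[OF v3(1) v2(1) d32 ce3 ce2]
        by auto
    qed
    show "\<not> (\<exists>C B. max_comm_class C \<and> common_eigenbasis C B \<and> (\<forall>i<length [C1, C2, C3]. unbiased B (Bs ! i)))"
    proof
      assume "\<exists>C B. max_comm_class C \<and> common_eigenbasis C B \<and> (\<forall>i<length [C1, C2, C3]. unbiased B (Bs ! i))"
      then obtain C B where CB: "max_comm_class C" "common_eigenbasis C B" "\<forall>i<3. unbiased B (Bs ! i)" by auto
      obtain x4 y4 where v4: "valid x4 y4" "C = cls x4 y4" using max_cls[OF CB(1)] by blast
      obtain L4 where L4: "L4 \<in> set LL" "set L4 = lagS x4 y4" using F2'(6)[OF v4(1)] by blast
      have "\<not> (ldisj L4 L1 \<and> ldisj L4 L2 \<and> ldisj L4 L3)" using L3(4) L4(1) by blast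
      hence "lagS x4 y4 \<inter> lagS x1 y1 \<noteq> {} \<or> lagS x4 y4 \<inter> lagS x2 y2 \<noteq> {} \<or> lagS x4 y4 \<inter> lagS x3 y3 \<noteq> {}"
        using L4(2) L1(2) L2(2) v3(2) by (simp add: disj_iff)
      thus False
      proof (elim disjE)
        assume "lagS x4 y4 \<inter> lagS x1 y1 \<noteq> {}"
        then obtain t where t: "t \<in> lagS x4 y4" "t \<in> lagS x1 y1" by blast
        show False by (rule NU[OF lagS_NZ[OF v4(1) t(1)] _ _ CB(2) ce1]) (use t v4 CB(3) in \<open>auto simp: cls_def\<close>)
      next
        assume "lagS x4 y4 \<inter> lagS x2 y2 \<noteq> {}"
        then obtain t where t: "t \<in> lagS x4 y4" "t \<in> lagS x2 y2" by blast
        show False by (rule NU[OF lagS_NZ[OF v4(1) t(1)] _ _ CB(2) ce2]) (use t v4 CB(3) in \<open>auto simp: cls_def\<close>)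
      next
        assume "lagS x4 y4 \<inter> lagS x3 y3 \<noteq> {}"
        then obtain t where t: "t \<in> lagS x4 y4" "t \<in> lagS x3 y3" by blast
        show False by (rule NU[OF lagS_NZ[OF v4(1) t(1)] _ _ CB(2) ce3]) (use t v4 CB(3) in \<open>auto simp: cls_def\<close>)
      qed
    qed
    qed
  qed
  qed
  show ?thesis using m3 c31 c32 wu by blast
qed


end
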